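(* Let $\Bbbk$ be a field of characteristic $\neq 2$ and let $A_1,\dots,A_m\in\Bbbk^{n\times n}$ be symmetric matrices. There exists $P\in\mathrm{GL}_n(\Bbbk)$ such that $P^TA_iP$ is diagonal for every $1\le i\le m$ if and only if $Z(A_1,\dots,A_m)$ contains $n$ nonzero matrices $\epsilon_1,\dots,\epsilon_n$ with $\epsilon_j^2=\epsilon_j$, $\epsilon_j\epsilon_l=0$ for $j\ne l$, and $\epsilon_1+\cdots+\epsilon_n=I_n$.
   Context: The center of symmetric matrices $A_1,\dots,A_m\in\Bbbk^{n\times n}$ is $Z(A_1,\dots,A_m)=\{X\in\Bbbk^{n\times n} : (A_iX)^T=A_iX \text{ for all } 1\le i\le m\}$. *)

theory Defs
  imports "Jordan_Normal_Form.Matrix"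
begin

definition center_mat :: "nat \<Rightarrow> nat \<Rightarrow> (nat \<Rightarrow> 'a::comm_ring_1 mat) \<Rightarrow> 'a mat set" where
  "center_mat n m A = {X \<in> carrier_mat n n. \<forall>i<m. transpose_mat (A i * X) = A i * X}"

end

theory Submission
  imports Defs "Jordan_Normal_Form.Determinant"
begin



lemma foldr_sum_mat:
  assumes "\<forall>x\<in>set xs. f x \<in> carrier_mat n n" "acc \<in> carrier_mat n n"
  shows "foldr (+) (map f xs) acc \<in> carrier_mat n n \<and>
    (\<forall>a<n. \<forall>b<n. foldr (+) (map f xs) acc $$ (a,b) = (\<Sum>x\<leftarrow>xs. f x $$ (a,b)) + acc $$ (a,b))"
  using assms by (induction xs) (auto simp: add.assoc)

lemma foldr_sum_upt:
  assumes "\<forall>j<k. f j \<in> carrier_mat n n"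
  shows "foldr (+) (map f [0..<k]) (0\<^sub>m n n) \<in> carrier_mat n n \<and>
    (\<forall>a<n. \<forall>b<n. foldr (+) (map f [0..<k]) (0\<^sub>m n n) $$ (a,b) = (\<Sum>j<k. f j $$ (a,b)))"
proof -
  have "\<forall>x\<in>set [0..<k]. f x \<in> carrier_mat n n" using assms by auto
  from foldr_sum_mat[OF this, of "0\<^sub>m n n"] show ?thesis
    by (simp add: interv_sum_list_conv_sum_set_nat atLeast0LessThan)
qed

lemma sum_single:
  fixes f :: "nat \<Rightarrow> 'a::comm_monoid_add"
  assumes "j < n" "\<forall>k<n. k \<noteq> j \<longrightarrow> f k = 0"
  shows "sum f {0..<n} = f j"
proof -
  have "sum f {0..<n} = f j + sum f ({0..<n} - {j})"
    using assms(1) by (simp add: sum.remove)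
  also have "sum f ({0..<n} - {j}) = 0" using assms(2) by (intro sum.neutral) auto
  finally show ?thesis by simp
qed

lemma backward:
  fixes A :: "nat \<Rightarrow> 'a::field mat" and \<epsilon> :: "nat \<Rightarrow> 'a mat"
  assumes dims: "\<forall>i<m. A i \<in> carrier_mat n n"
    and sym: "\<forall>i<m. transpose_mat (A i) = A i"
    and eps: "\<forall>j<n. \<epsilon> j \<in> center_mat n m A \<and> \<epsilon> j \<noteq> 0\<^sub>m n n \<and> \<epsilon> j * \<epsilon> j = \<epsilon> j"
    and orth: "\<forall>j<n. \<forall>l<n. j \<noteq> l \<longrightarrow> \<epsilon> j * \<epsilon> l = 0\<^sub>m n n"
  shows "\<exists>P \<in> carrier_mat n n. invertible_mat P \<and> (\<forall>i<m. diagonal_mat (transpose_mat P * A i * P))"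
proof -
  have car: "\<And>j. j<n \<Longrightarrow> \<epsilon> j \<in> carrier_mat n n" using eps by (auto simp: center_mat_def)
  have cen: "\<And>j i. j<n \<Longrightarrow> i<m \<Longrightarrow> transpose_mat (A i * \<epsilon> j) = A i * \<epsilon> j"
    using eps by (auto simp: center_mat_def)
  have ex: "\<exists>k<n. col (\<epsilon> j) k \<noteq> 0\<^sub>v n" if j: "j<n" for j
  proof (rule ccontr)
    assume "\<not> ?thesis"
    hence z: "\<And>k. k<n \<Longrightarrow> col (\<epsilon> j) k = 0\<^sub>v n" by auto
    have "\<epsilon> j = 0\<^sub>m n n"
    proof (rule eq_matI)
      fix a b assume ab: "a < dim_row (0\<^sub>m n n)" "b < dim_col (0\<^sub>m n n)"
      have "\<epsilon> j $$ (a,b) = col (\<epsilon> j) b $ a" using ab car[OF j] by auto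
      also have "\<dots> = 0" using z[of b] ab by auto
      finally show "\<epsilon> j $$ (a,b) = 0\<^sub>m n n $$ (a,b)" using ab by simp
    qed (use car[OF j] in auto)
    thus False using eps j by auto
  qed
  define k where "k j = (SOME k. k<n \<and> col (\<epsilon> j) k \<noteq> 0\<^sub>v n)" for j
  have kp: "k j < n \<and> col (\<epsilon> j) (k j) \<noteq> 0\<^sub>v n" if "j<n" for j
    unfolding k_def using someI_ex[OF ex[OF that]] .
  define v where "v j = col (\<epsilon> j) (k j)" for j
  have vc: "v j \<in> carrier_vec n" if "j<n" for j using car[OF that] by (auto simp: v_def)
  have vnz: "v j \<noteq> 0\<^sub>v n" if "j<n" for j using kp[OF that] by (auto simp: v_def)
  have ev: "\<epsilon> j *\<^sub>v v l = (if j = l then v l else 0\<^sub>v n)" if jl: "j<n" "l<n" for j l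
  proof -
    have "\<epsilon> j *\<^sub>v v l = col (\<epsilon> j * \<epsilon> l) (k l)"
      unfolding v_def using col_mult2[OF car[OF jl(1)] car[OF jl(2)], of "k l"] kp[OF jl(2)] by simp
    thus ?thesis using eps orth jl kp[OF jl(2)] by (auto simp: v_def)
  qed
  define P where "P = mat n n (\<lambda>(a,l). v l $ a)"
  have Pc: "P \<in> carrier_mat n n" by (simp add: P_def)
  have colP: "col P l = v l" if "l<n" for l
    using vc[OF that] that by (intro eq_vecI) (auto simp: P_def)
  have detP: "det P \<noteq> 0"
  proof
    assume "det P = 0"
    then obtain c where c: "c \<in> carrier_vec n" "c \<noteq> 0\<^sub>v n" "P *\<^sub>v c = 0\<^sub>v n"
      using det_0_iff_vec_prod_zero_field[OF Pc] by auto
    have cj: "c $ j = 0" if j: "j<n" for j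
    proof -
      have z: "(\<epsilon> j * P) *\<^sub>v c = 0\<^sub>v n"
      proof -
        have "(\<epsilon> j * P) *\<^sub>v c = \<epsilon> j *\<^sub>v 0\<^sub>v n"
          using c car[OF j] Pc by (simp add: assoc_mult_mat_vec[of _ n n _ n])
        also have "\<dots> = 0\<^sub>v n" using car[OF j] by (intro eq_vecI) auto
        finally show ?thesis .
      qed
      have eP: "\<epsilon> j * P = mat n n (\<lambda>(a,l). if l = j then v j $ a else 0)"
      proof (rule eq_matI)
        fix a l assume al: "a < dim_row (mat n n (\<lambda>(a,l). if l = j then v j $ a else 0))"
          "l < dim_col (mat n n (\<lambda>(a,l). if l = j then v j $ a else 0))"
        hence al': "a<n" "l<n" by auto
        have "(\<epsilon> j * P) $$ (a,l) = row (\<epsilon> j) a \<bullet> col P l" using al' car[OF j] Pc by simp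
        also have "\<dots> = (\<epsilon> j *\<^sub>v v l) $ a" using al' car[OF j] colP[OF al'(2)] by simp
        also have "\<dots> = (if l = j then v j $ a else 0)" using ev[OF j al'(2)] al' by auto
        finally show "(\<epsilon> j * P) $$ (a,l) = mat n n (\<lambda>(a,l). if l = j then v j $ a else 0) $$ (a,l)"
          using al' by simp
      qed (use car[OF j] Pc in auto)
      obtain a where a: "a<n" "v j $ a \<noteq> 0"
        using vnz[OF j] vc[OF j] by (metis eq_vecI carrier_vecD index_zero_vec(1,2))
      have "((\<epsilon> j * P) *\<^sub>v c) $ a = (\<Sum>l\<in>{0..<n}. (if l = j then v j $ a else 0) * c $ l)"
        using a c unfolding eP by (simp add: scalar_prod_def)
      also have "\<dots> = v j $ a * c $ j"
        by (rule trans[OF sum_single[of j]]) (use j in auto)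
      finally have "v j $ a * c $ j = 0" using z a by simp
      thus ?thesis using a by simp
    qed
    have "c = 0\<^sub>v n" using c(1) cj by (intro eq_vecI) auto
    thus False using c by auto
  qed
  have "P \<in> Units (ring_mat TYPE('a) n ())" by (rule det_non_zero_imp_unit[OF Pc detP])
  then obtain B where B: "B \<in> carrier_mat n n" "P * B = 1\<^sub>m n" "B * P = 1\<^sub>m n"
    unfolding Units_def ring_mat_def by auto
  have inv: "invertible_mat P"
    unfolding invertible_mat_def inverts_mat_def using B Pc by auto
  have diag: "diagonal_mat (transpose_mat P * A i * P)" if i: "i<m" for i
    unfolding diagonal_mat_def
  proof (intro allI impI)
    fix j l assume jl: "j < dim_row (transpose_mat P * A i * P)" "l < dim_col (transpose_mat P * A i * P)" "j \<noteq> l"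
    hence j: "j<n" and l: "l<n" using Pc by auto
    have Ai: "A i \<in> carrier_mat n n" using dims i by auto
    define w where "w = A i *\<^sub>v v l"
    have wc: "w \<in> carrier_vec n" using Ai vc[OF l] by (simp add: w_def)
    have "transpose_mat P * A i * P = transpose_mat P * (A i * P)"
      using Pc Ai by (intro assoc_mult_mat[of _ n n]) auto
    hence "(transpose_mat P * A i * P) $$ (j,l) = row (transpose_mat P) j \<bullet> col (A i * P) l"
      using Pc Ai j l by simp
    also have "\<dots> = v j \<bullet> w" using Pc Ai j l colP by (simp add: w_def mult_mat_vec_def)
    also have "w = A i *\<^sub>v (\<epsilon> l *\<^sub>v v l)" using ev[OF l l] by (simp add: w_def)
    also have "\<dots> = (A i * \<epsilon> l) *\<^sub>v v l" using Ai car[OF l] vc[OF l] by simp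
    also have "\<dots> = transpose_mat (A i * \<epsilon> l) *\<^sub>v v l" using cen[OF l i] by simp
    also have "\<dots> = (transpose_mat (\<epsilon> l) * A i) *\<^sub>v v l"
      using transpose_mult[OF Ai car[OF l]] sym i by simp
    also have "\<dots> = transpose_mat (\<epsilon> l) *\<^sub>v w" using Ai car[OF l] vc[OF l]
      by (simp add: w_def assoc_mult_mat_vec[of _ n n _ n])
    also have "v j \<bullet> (transpose_mat (\<epsilon> l) *\<^sub>v w) = (transpose_mat (\<epsilon> l) *\<^sub>v w) \<bullet> v j"
      using car[OF l] wc vc[OF j] by (intro comm_scalar_prod[of _ n]) auto
    also have "\<dots> = w \<bullet> (\<epsilon> l *\<^sub>v v j)"
      by (rule transpose_vec_mult_scalar[OF car[OF l] vc[OF j] wc])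
    also have "\<dots> = 0" using ev[OF l j] jl(3) wc by simp
    finally show "(transpose_mat P * A i * P) $$ (j,l) = 0" .
  qed
  show ?thesis using Pc inv diag by blast
qed


lemma E_entry:
  fixes X Y :: "'a::comm_ring_1 mat"
  assumes X: "X \<in> carrier_mat n n" and Y: "Y \<in> carrier_mat n n" and j: "j<n" and a: "a<n" and b: "b<n"
  shows "(X * mat n n (\<lambda>(a,b). if a = j \<and> b = j then 1 else 0) * Y) $$ (a,b) = X $$ (a,j) * Y $$ (j,b)"
proof -
  let ?E = "mat n n (\<lambda>(a,b). if a = j \<and> b = j then 1 else 0) :: 'a mat"
  have XE: "X * ?E = mat n n (\<lambda>(a,c). if c = j then X $$ (a,j) else 0)"
  proof (rule eq_matI)
    fix a c assume ac: "a < dim_row (mat n n (\<lambda>(a,c). if c = j then X $$ (a,j) else 0))"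
      "c < dim_col (mat n n (\<lambda>(a,c). if c = j then X $$ (a,j) else 0))"
    hence a: "a<n" and c: "c<n" by auto
    have "(X * ?E) $$ (a,c) = (\<Sum>k\<in>{0..<n}. X $$ (a,k) * ?E $$ (k,c))"
      using X a c by (simp add: scalar_prod_def)
    also have "\<dots> = X $$ (a,j) * ?E $$ (j,c)"
      by (rule sum_single) (use j c in auto)
    finally show "(X * ?E) $$ (a,c) = mat n n (\<lambda>(a,c). if c = j then X $$ (a,j) else 0) $$ (a,c)"
      using a c j by auto
  qed (use X in auto)
  have "(X * ?E * Y) $$ (a,b) = (\<Sum>c\<in>{0..<n}. (X * ?E) $$ (a,c) * Y $$ (c,b))"
    using X Y a b by (simp add: scalar_prod_def)
  also have "\<dots> = (X * ?E) $$ (a,j) * Y $$ (j,b)"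
    by (rule sum_single) (use j XE a in auto)
  also have "\<dots> = X $$ (a,j) * Y $$ (j,b)" using XE a j by simp
  finally show ?thesis .
qed

lemma forward:
  fixes A :: "nat \<Rightarrow> 'a::field mat"
  assumes dims: "\<forall>i<m. A i \<in> carrier_mat n n"
    and Pc: "P \<in> carrier_mat n n" and inv: "invertible_mat P"
    and diag: "\<forall>i<m. diagonal_mat (transpose_mat P * A i * P)"
  shows "\<exists>\<epsilon> :: nat \<Rightarrow> 'a mat.
            (\<forall>j<n. \<epsilon> j \<in> center_mat n m A \<and> \<epsilon> j \<noteq> 0\<^sub>m n n \<and> \<epsilon> j * \<epsilon> j = \<epsilon> j) \<and>
            (\<forall>j<n. \<forall>l<n. j \<noteq> l \<longrightarrow> \<epsilon> j * \<epsilon> l = 0\<^sub>m n n) \<and>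
            foldr (+) (map \<epsilon> [0..<n]) (0\<^sub>m n n) = 1\<^sub>m n"
proof -
  obtain Q where PQ0: "P * Q = 1\<^sub>m (dim_row P)" and QP0: "Q * P = 1\<^sub>m (dim_row Q)"
    using inv unfolding invertible_mat_def inverts_mat_def by auto
  have dcQ: "dim_col Q = n" using arg_cong[OF PQ0, of dim_col] Pc by simp
  have drQ: "dim_row Q = n" using arg_cong[OF QP0, of dim_col] Pc by simp
  have Qc: "Q \<in> carrier_mat n n" using dcQ drQ by auto
  have PQ: "P * Q = 1\<^sub>m n" and QP: "Q * P = 1\<^sub>m n" using PQ0 QP0 Pc drQ by auto
  define E where "E j = (mat n n (\<lambda>(a,b). if a = j \<and> b = j then 1 else 0) :: 'a mat)" for j
  define \<epsilon> where "\<epsilon> j = P * E j * Q" for j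
  have Ec: "E j \<in> carrier_mat n n" for j by (simp add: E_def)
  have ec: "\<epsilon> j \<in> carrier_mat n n" for j unfolding \<epsilon>_def using Pc Qc Ec[of j] by (meson mult_carrier_mat)
  have ee: "\<epsilon> j $$ (a,b) = P $$ (a,j) * Q $$ (j,b)" if "j<n" "a<n" "b<n" for j a b
    unfolding \<epsilon>_def E_def by (rule E_entry[OF Pc Qc that])
  have prod: "(\<epsilon> j * \<epsilon> l) $$ (a,b) = P $$ (a,j) * (Q * P) $$ (j,l) * Q $$ (l,b)"
    if "j<n" "l<n" "a<n" "b<n" for j l a b
  proof -
    have "(\<epsilon> j * \<epsilon> l) $$ (a,b) = (\<Sum>c\<in>{0..<n}. \<epsilon> j $$ (a,c) * \<epsilon> l $$ (c,b))"
      using ec[of j] ec[of l] that by (simp add: scalar_prod_def)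
    also have "\<dots> = (\<Sum>c\<in>{0..<n}. P $$ (a,j) * (Q $$ (j,c) * P $$ (c,l)) * Q $$ (l,b))"
      using that by (intro sum.cong) (auto simp: ee mult_ac)
    also have "\<dots> = P $$ (a,j) * (\<Sum>c\<in>{0..<n}. Q $$ (j,c) * P $$ (c,l)) * Q $$ (l,b)"
      by (simp add: sum_distrib_left sum_distrib_right)
    also have "(\<Sum>c\<in>{0..<n}. Q $$ (j,c) * P $$ (c,l)) = (Q * P) $$ (j,l)"
      using Pc Qc that by (simp add: scalar_prod_def)
    finally show ?thesis .
  qed
  have prod2: "\<epsilon> j * \<epsilon> l = (if j = l then \<epsilon> j else 0\<^sub>m n n)" if jl: "j<n" "l<n" for j l
  proof (rule eq_matI)
    fix a b assume "a < dim_row (if j = l then \<epsilon> j else 0\<^sub>m n n)" "b < dim_col (if j = l then \<epsilon> j else 0\<^sub>m n n)"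
    hence ab: "a<n" "b<n" using ec[of j] by (auto split: if_splits)
    show "(\<epsilon> j * \<epsilon> l) $$ (a,b) = (if j = l then \<epsilon> j else 0\<^sub>m n n) $$ (a,b)"
      using prod[OF jl ab] QP jl ab ee by auto
  qed (use ec[of j] ec[of l] in auto)
  have nz: "\<epsilon> j \<noteq> 0\<^sub>m n n" if j: "j<n" for j
  proof
    assume z: "\<epsilon> j = 0\<^sub>m n n"
    have "(Q * P) $$ (j,j) = (\<Sum>c\<in>{0..<n}. Q $$ (j,c) * P $$ (c,j))"
      using Pc Qc j by (simp add: scalar_prod_def)
    also have "\<dots> = (\<Sum>c\<in>{0..<n}. \<epsilon> j $$ (c,c))"
      using j by (intro sum.cong) (auto simp: ee mult_ac)
    also have "\<dots> = 0" using z by simp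
    finally show False using QP j by simp
  qed
  have AP: "A i * P = transpose_mat Q * (transpose_mat P * A i * P)" if i: "i<m" for i
  proof -
    have Ai: "A i \<in> carrier_mat n n" using dims i by auto
    have "transpose_mat Q * (transpose_mat P * A i * P) = (transpose_mat Q * transpose_mat P) * A i * P"
      using Pc Qc Ai by (simp add: assoc_mult_mat[of _ n n _ n _ n])
    also have "transpose_mat Q * transpose_mat P = transpose_mat (P * Q)"
      using transpose_mult[OF Pc Qc] by simp
    also have "\<dots> = 1\<^sub>m n" using PQ by simp
    finally show ?thesis using Ai by simp
  qed
  have cen: "transpose_mat (A i * \<epsilon> j) = A i * \<epsilon> j" if i: "i<m" and j: "j<n" for i j
  proof -
    have Ai: "A i \<in> carrier_mat n n" using dims i by auto
    define D where "D = transpose_mat P * A i * P"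
    have Dc: "D \<in> carrier_mat n n" using Pc Ai by (simp add: D_def)
    have Dd: "D $$ (c,j) = 0" if "c<n" "c \<noteq> j" for c
      using diag i that j Dc unfolding diagonal_mat_def D_def by auto
    have e1: "A i * \<epsilon> j = (A i * P) * E j * Q"
      using Ai Pc Qc Ec[of j] by (simp add: \<epsilon>_def assoc_mult_mat[of _ n n _ n _ n])
    have ent: "(A i * \<epsilon> j) $$ (a,b) = Q $$ (j,a) * D $$ (j,j) * Q $$ (j,b)" if ab: "a<n" "b<n" for a b
    proof -
      have "(A i * \<epsilon> j) $$ (a,b) = (A i * P) $$ (a,j) * Q $$ (j,b)"
        unfolding e1 E_def using Ai Pc by (intro E_entry[OF _ Qc j ab]) auto
      also have "(A i * P) $$ (a,j) = (\<Sum>c\<in>{0..<n}. Q $$ (c,a) * D $$ (c,j))"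
        unfolding AP[OF i] D_def[symmetric] using Qc Dc ab j by (simp add: scalar_prod_def)
      also have "\<dots> = Q $$ (j,a) * D $$ (j,j)"
        by (rule sum_single) (use j Dd in auto)
      finally show ?thesis .
    qed
    show ?thesis
    proof (rule eq_matI)
      fix a b assume "a < dim_row (A i * \<epsilon> j)" "b < dim_col (A i * \<epsilon> j)"
      hence ab: "a<n" "b<n" using Ai ec[of j] by auto
      show "transpose_mat (A i * \<epsilon> j) $$ (a,b) = (A i * \<epsilon> j) $$ (a,b)"
        using ab ent[OF ab] ent[OF ab(2) ab(1)] Ai ec[of j] by (simp add: mult_ac)
    qed (use Ai ec[of j] in auto)
  qed
  have sum: "foldr (+) (map \<epsilon> [0..<n]) (0\<^sub>m n n) = 1\<^sub>m n"
  proof -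
    have F: "foldr (+) (map \<epsilon> [0..<n]) (0\<^sub>m n n) \<in> carrier_mat n n \<and>
      (\<forall>a<n. \<forall>b<n. foldr (+) (map \<epsilon> [0..<n]) (0\<^sub>m n n) $$ (a,b) = (\<Sum>j<n. \<epsilon> j $$ (a,b)))"
      by (rule foldr_sum_upt) (use ec in auto)
    show ?thesis
    proof (rule eq_matI)
      fix a b assume "a < dim_row (1\<^sub>m n :: 'a mat)" "b < dim_col (1\<^sub>m n :: 'a mat)"
      hence ab: "a<n" "b<n" by auto
      have "(\<Sum>j<n. \<epsilon> j $$ (a,b)) = (\<Sum>j\<in>{0..<n}. P $$ (a,j) * Q $$ (j,b))"
        using ab by (auto simp: ee atLeast0LessThan intro: sum.cong)
      also have "\<dots> = (P * Q) $$ (a,b)" using Pc Qc ab by (simp add: scalar_prod_def)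
      finally show "foldr (+) (map \<epsilon> [0..<n]) (0\<^sub>m n n) $$ (a,b) = 1\<^sub>m n $$ (a,b)"
        using F ab PQ by simp
    qed (use F in auto)
  qed
  show ?thesis
    by (rule exI[of _ \<epsilon>]) (use ec cen nz prod2 sum in \<open>auto simp: center_mat_def\<close>)
qed


theorem mainTheorem3:
  fixes n m :: nat and A :: "nat \<Rightarrow> 'a::field mat"
  assumes char: "(2::'a) \<noteq> 0"
    and dims: "\<forall>i<m. A i \<in> carrier_mat n n"
    and sym: "\<forall>i<m. transpose_mat (A i) = A i"
  shows "(\<exists>P \<in> carrier_mat n n. invertible_mat P \<and>
            (\<forall>i<m. diagonal_mat (transpose_mat P * A i * P)))
     \<longleftrightarrow>
         (\<exists>\<epsilon> :: nat \<Rightarrow> 'a mat.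
            (\<forall>j<n. \<epsilon> j \<in> center_mat n m A \<and> \<epsilon> j \<noteq> 0\<^sub>m n n \<and> \<epsilon> j * \<epsilon> j = \<epsilon> j) \<and>
            (\<forall>j<n. \<forall>l<n. j \<noteq> l \<longrightarrow> \<epsilon> j * \<epsilon> l = 0\<^sub>m n n) \<and>
            foldr (+) (map \<epsilon> [0..<n]) (0\<^sub>m n n) = 1\<^sub>m n)"
  using backward[OF dims sym] forward[OF dims] by blast

end
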